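(* For every prime $p$ and every integer $q$ coprime to $p$, $$|\mathrm{def}(p;q,1)|\le |\mathrm{def}(p;1,1)|=\tfrac13(p-1)(p-2).$$
   Context: For $z\in\mathbb{R}$ define $((z))=z-[z]-\tfrac12$ if $z\notin\mathbb{Z}$ and $((z))=0$ if $z\in\mathbb{Z}$, where $[z]$ is the greatest integer $\le z$. For $q$ coprime to $p$ define $$\mathrm{def}(p;q,1)=-4p\sum_{k=0}^{p-1}\left(\left(\frac{k}{p}\right)\right)\left(\left(\frac{qk}{p}\right)\right).$$ *)

theory Defs
  imports Complex_Main "HOL-Computational_Algebra.Primes"
begin

definition sawtooth :: "real \<Rightarrow> real" where
  "sawtooth z = (if z \<in> \<int> then 0 else z - of_int \<lfloor>z\<rfloor> - 1/2)"

definition dedef :: "nat \<Rightarrow> int \<Rightarrow> real" where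
  "dedef p q = - 4 * real p *
     (\<Sum>k = 0..<p. sawtooth (real k / real p) * sawtooth (of_int (q * int k) / real p))"

end

theory Submission
  imports Defs
begin

lemma saw_shift: "sawtooth (x + of_int n) = sawtooth x"
proof -
  have "(x + of_int n \<in> \<int>) = (x \<in> \<int>)"
    by (metis Ints_add Ints_diff Ints_of_int add_diff_cancel_right')
  moreover have "\<lfloor>x + of_int n\<rfloor> = \<lfloor>x\<rfloor> + n" by simp
  ultimately show ?thesis unfolding sawtooth_def by simp
qed

lemma saw_frac:
  assumes "0 < k" "k < p"
  shows "sawtooth (real k / real p) = real k / real p - 1/2"
proof -
  have a: "0 < real k / real p" "real k / real p < 1" using assms by auto
  have "real k / real p \<notin> \<int>"
  proof
    assume "real k / real p \<in> \<int>"
    then obtain m where "real k / real p = of_int m" by (auto elim: Ints_cases)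
    with a show False by (metis of_int_0_less_iff of_int_less_1_iff not_less zero_less_iff_neq_zero int_one_le_iff_zero_less)
  qed
  moreover have "\<lfloor>real k / real p\<rfloor> = 0" using a by (simp add: floor_eq_iff)
  ultimately show ?thesis unfolding sawtooth_def by simp
qed

lemma saw_zero: "sawtooth 0 = 0" unfolding sawtooth_def by simp

lemma sumsq:
  fixes p :: nat assumes "p > 0"
  shows "4 * real p * (\<Sum>k = 0..<p. (sawtooth (real k / real p))^2) = (real p - 1) * (real p - 2) / 3"
proof -
  have "(\<Sum>k = 0..<p. (sawtooth (real k / real p))^2) = (\<Sum>k = 0..<p. if k = 0 then 0 else (real k / real p - 1/2)^2)"
    by (rule sum.cong) (auto simp: saw_frac saw_zero)
  also have "\<dots> = (\<Sum>k = 0..<p. (real k / real p - 1/2)^2) - 1/4"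
  proof -
    have "(\<Sum>k = 0..<p. if k = 0 then 0 else (real k / real p - 1/2)^2) = (\<Sum>k = Suc 0..<p. (real k / real p - 1/2)^2)"
      using assms by (simp add: sum.atLeast_Suc_lessThan)
    moreover have "(\<Sum>k = 0..<p. (real k / real p - 1/2)^2) = 1/4 + (\<Sum>k = Suc 0..<p. (real k / real p - 1/2)^2)"
      using assms by (simp add: sum.atLeast_Suc_lessThan power2_eq_square)
    ultimately show ?thesis by simp
  qed
  finally have e: "(\<Sum>k = 0..<p. (sawtooth (real k / real p))^2) = (\<Sum>k<p. (real k / real p - 1/2)^2) - 1/4"
    by (simp add: atLeast0LessThan)
  have h0: "3 * (\<Sum>k<n. (2 * real k - real p)^2) = 2 * (real n - 1) * real n * (2*real n - 1) - 6 * real p * (real n - 1) * real n + 3 * real n * (real p)^2" for n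
    by (induction n) (simp_all add: algebra_simps power2_eq_square)
  have h: "(\<Sum>k<n. (2 * real k - real p)^2) = 2 * (real n - 1) * real n * (2*real n - 1) / 3 - 2 * real p * (real n - 1) * real n + real n * (real p)^2" for n
    using h0[of n] by simp
  have t: "(real k / real p - 1/2)^2 = (2 * real k - real p)^2 / (4 * (real p)^2)" for k
    using assms by (simp add: field_simps power2_eq_square)
  have "(\<Sum>k<p. (real k / real p - 1/2)^2) = (\<Sum>k<p. (2 * real k - real p)^2) / (4 * (real p)^2)"
    unfolding t by (simp add: sum_divide_distrib)
  also have "\<dots> = (2 * (real p - 1) * real p * (2*real p - 1) / 3 - 2 * real p * (real p - 1) * real p + real p * (real p)^2) / (4 * (real p)^2)"
    by (simp only: h)
  finally have g: "(\<Sum>k<p. (real k / real p - 1/2)^2) = (2 * (real p - 1) * real p * (2*real p - 1) / 3 - 2 * real p * (real p - 1) * real p + real p * (real p)^2) / (4 * (real p)^2)" .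
  show ?thesis unfolding e g using assms by (simp add: field_simps power2_eq_square)
qed

lemma perm_sum:
  fixes p :: nat and q :: int and f :: "nat \<Rightarrow> real"
  assumes "p > 0" "coprime q (int p)"
  shows "(\<Sum>k = 0..<p. f (nat ((q * int k) mod int p))) = (\<Sum>k = 0..<p. f k)"
proof -
  let ?g = "\<lambda>k. nat ((q * int k) mod int p)"
  have img: "?g ` {0..<p} \<subseteq> {0..<p}" using assms
    by (auto simp: nat_less_iff)
  have inj: "inj_on ?g {0..<p}"
  proof
    fix a b assume ab: "a \<in> {0..<p}" "b \<in> {0..<p}" "?g a = ?g b"
    have "(q * int a) mod int p = (q * int b) mod int p"
      using ab(3) assms(1) by (simp add: eq_nat_nat_iff)
    hence "int p dvd q * int a - q * int b" by (simp add: mod_eq_dvd_iff)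
    hence "int p dvd q * (int a - int b)" by (simp add: right_diff_distrib)
    hence d: "int p dvd (int a - int b)" using assms(2)
      by (metis coprime_commute coprime_dvd_mult_right_iff)
    have "int a - int b = 0"
    proof (rule ccontr)
      assume "int a - int b \<noteq> 0"
      from dvd_imp_le_int[OF this d] ab(1,2) show False by auto
    qed
    thus "a = b" using ab by simp
  qed
  have "?g ` {0..<p} = {0..<p}" using inj img by (simp add: endo_inj_surj)
  then have "(\<Sum>k = 0..<p. f k) = (\<Sum>k\<in>?g ` {0..<p}. f k)" by simp
  also have "\<dots> = (\<Sum>k = 0..<p. f (?g k))" using inj by (simp add: sum.reindex)
  finally show ?thesis by simp
qed

theorem mainTheorem3:
  fixes p :: nat and q :: int
  assumes "prime p" and "coprime q (int p)"
  shows "\<bar>dedef p q\<bar> \<le> \<bar>dedef p 1\<bar> \<and> \<bar>dedef p 1\<bar> = (real p - 1) * (real p - 2) / 3"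
proof -
  have p0: "p > 0" using assms(1) prime_gt_0_nat by blast
  define a where "a = (\<lambda>k::nat. sawtooth (real k / real p))"
  define b where "b = (\<lambda>k::nat. sawtooth (of_int (q * int k) / real p))"
  have bk: "b k = a (nat ((q * int k) mod int p))" for k
  proof -
    have "of_int (q * int k) / real p = of_int ((q * int k) mod int p) / real p + of_int ((q * int k) div int p)"
    proof -
      have "q * int k = int p * ((q * int k) div int p) + (q * int k) mod int p" by simp
      hence "(of_int (q * int k) :: real) = real p * of_int ((q * int k) div int p) + of_int ((q * int k) mod int p)"
        by (metis of_int_add of_int_mult of_int_of_nat_eq)
      thus ?thesis using p0 by (simp add: field_simps)
    qed
    moreover have "of_int ((q * int k) mod int p) = real (nat ((q * int k) mod int p))"
      using p0 by simp
    ultimately have "of_int (q * int k) / real p = real (nat ((q * int k) mod int p)) / real p + of_int ((q * int k) div int p)"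
      by (metis (no_types))
    hence "b k = sawtooth (real (nat ((q * int k) mod int p)) / real p + of_int ((q * int k) div int p))"
      unfolding b_def by (simp only:)
    thus ?thesis unfolding a_def by (simp only: saw_shift)
  qed
  have sb: "(\<Sum>k = 0..<p. (b k)^2) = (\<Sum>k = 0..<p. (a k)^2)"
    unfolding bk using perm_sum[OF p0 assms(2), of "\<lambda>k. (a k)^2"] by simp
  define S where "S = (\<Sum>k = 0..<p. (a k)^2)"
  have S0: "S \<ge> 0" unfolding S_def by (simp add: sum_nonneg)
  have d1: "dedef p 1 = - 4 * real p * S"
    unfolding dedef_def S_def a_def by (simp add: power2_eq_square)
  have dq: "dedef p q = - 4 * real p * (\<Sum>k = 0..<p. a k * b k)"
    unfolding dedef_def a_def b_def by simp
  have "\<bar>\<Sum>k = 0..<p. a k * b k\<bar> \<le> (\<Sum>k = 0..<p. \<bar>a k * b k\<bar>)" by (rule sum_abs)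
  also have "\<dots> \<le> (\<Sum>k = 0..<p. ((a k)^2 + (b k)^2) / 2)"
  proof (rule sum_mono)
    fix k
    have "0 \<le> (\<bar>a k\<bar> - \<bar>b k\<bar>)^2" by simp
    thus "\<bar>a k * b k\<bar> \<le> ((a k)^2 + (b k)^2) / 2"
      by (simp add: power2_eq_square abs_mult algebra_simps)
  qed
  also have "\<dots> = S" unfolding S_def using sb by (simp add: sum.distrib sum_divide_distrib[symmetric])
  finally have le: "\<bar>\<Sum>k = 0..<p. a k * b k\<bar> \<le> S" .
  have "\<bar>dedef p q\<bar> = 4 * real p * \<bar>\<Sum>k = 0..<p. a k * b k\<bar>" unfolding dq by (simp add: abs_mult)
  also have "\<dots> \<le> 4 * real p * S" using le by (simp add: mult_left_mono)
  also have "\<dots> = \<bar>dedef p 1\<bar>" unfolding d1 using S0 by (simp add: abs_mult)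
  finally have A: "\<bar>dedef p q\<bar> \<le> \<bar>dedef p 1\<bar>" .
  have "\<bar>dedef p 1\<bar> = 4 * real p * S" unfolding d1 using S0 by (simp add: abs_mult)
  also have "\<dots> = (real p - 1) * (real p - 2) / 3" unfolding S_def a_def using sumsq[OF p0] .
  finally show ?thesis using A by simp
qed

end
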